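(* Let $w$ be a $\gamma$-stable instance of MAXCUT and let $w'$ be obtained from $w$ by merging two vertices $u,v$ that lie on the same side of $w$'s maximal cut. Then $w'$ is $\gamma$-stable and its maximal cut is the one induced from $w$'s maximal cut.
   Context: An instance of MAXCUT is a finite vertex set $V$ with a symmetric $w:V\times V\to[0,\infty)$ with zero diagonal. A $\gamma$-perturbation of $w$ is $w'$ with $w(a,b)\le w'(a,b)\le\gamma w(a,b)$ for all $a,b$; $w$ is $\gamma$-stable if some cut is maximal for every $\gamma$-perturbation (for $\gamma>1$ this cut is the unique maximal cut). Merging $u,v\in V$ gives the instance on $V'=(V\setminus\{u,v\})\cup\{v'\}$ with $w'(x,y)=w(x,y)$ for $x,y\in V\setminus\{u,v\}$ and $w'(v',x)=w(v,x)+w(u,x)$. The induced cut places $v'$ on the common side of $u,v$ and every other vertex on its original side. *)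

theory Defs
  imports Complex_Main
begin

definition maxcut_instance :: "'a set \<Rightarrow> ('a \<Rightarrow> 'a \<Rightarrow> real) \<Rightarrow> bool" where
  "maxcut_instance V w \<longleftrightarrow> finite V \<and>
     (\<forall>a\<in>V. \<forall>b\<in>V. w a b = w b a \<and> 0 \<le> w a b) \<and> (\<forall>a\<in>V. w a a = 0)"

text \<open>A cut is represented by one of its sides S \<subseteq> V (the other side is V - S).\<close>
definition cut_value :: "'a set \<Rightarrow> ('a \<Rightarrow> 'a \<Rightarrow> real) \<Rightarrow> 'a set \<Rightarrow> real" where
  "cut_value V w S = (\<Sum>a\<in>S. \<Sum>b\<in>V - S. w a b)"

definition is_max_cut :: "'a set \<Rightarrow> ('a \<Rightarrow> 'a \<Rightarrow> real) \<Rightarrow> 'a set \<Rightarrow> bool" where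
  "is_max_cut V w S \<longleftrightarrow> S \<subseteq> V \<and> (\<forall>T. T \<subseteq> V \<longrightarrow> cut_value V w T \<le> cut_value V w S)"

definition perturbation :: "'a set \<Rightarrow> real \<Rightarrow> ('a \<Rightarrow> 'a \<Rightarrow> real) \<Rightarrow> ('a \<Rightarrow> 'a \<Rightarrow> real) \<Rightarrow> bool" where
  "perturbation V \<gamma> w w' \<longleftrightarrow> maxcut_instance V w' \<and>
     (\<forall>a\<in>V. \<forall>b\<in>V. w a b \<le> w' a b \<and> w' a b \<le> \<gamma> * w a b)"

definition stable_cut :: "'a set \<Rightarrow> real \<Rightarrow> ('a \<Rightarrow> 'a \<Rightarrow> real) \<Rightarrow> 'a set \<Rightarrow> bool" where
  "stable_cut V \<gamma> w S \<longleftrightarrow> S \<subseteq> V \<and> (\<forall>w'. perturbation V \<gamma> w w' \<longrightarrow> is_max_cut V w' S)"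

definition gamma_stable :: "'a set \<Rightarrow> real \<Rightarrow> ('a \<Rightarrow> 'a \<Rightarrow> real) \<Rightarrow> bool" where
  "gamma_stable V \<gamma> w \<longleftrightarrow> (\<exists>S. stable_cut V \<gamma> w S)"

text \<open>Merging u into v: the merged vertex v' is named v, so the new vertex set is V - {u}.\<close>
definition merge_set :: "'a set \<Rightarrow> 'a \<Rightarrow> 'a \<Rightarrow> 'a set" where
  "merge_set V u v = V - {u}"

definition merge_weight :: "('a \<Rightarrow> 'a \<Rightarrow> real) \<Rightarrow> 'a \<Rightarrow> 'a \<Rightarrow> 'a \<Rightarrow> 'a \<Rightarrow> real" where
  "merge_weight w u v x y =
     (if x = v \<and> y = v then 0
      else if x = v then w v y + w u y
      else if y = v then w x v + w x u
      else w x y)"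

definition induced_cut :: "'a set \<Rightarrow> 'a \<Rightarrow> 'a \<Rightarrow> 'a set" where
  "induced_cut S u v = (if v \<in> S then (S - {u}) \<union> {v} else S - {u, v})"

end

theory Submission
  imports Defs
begin

lemma lift_cut:
  fixes W p :: "'a \<Rightarrow> 'a \<Rightarrow> real"
  assumes fin: "finite V" and uV: "u \<in> V" and vV: "v \<in> V" and uv: "u \<noteq> v"
    and P1: "\<forall>a\<in>V-{u}-{v}. \<forall>b\<in>V-{u}-{v}. W a b = p a b"
    and P2: "\<forall>b\<in>V-{u}-{v}. W u b + W v b = p v b"
    and P3: "\<forall>a\<in>V-{u}-{v}. W a u + W a v = p a v"
    and T: "T \<subseteq> V - {u}"
  shows "cut_value V W (if v \<in> T then insert u T else T) = cut_value (V - {u}) p T"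
proof (cases "v \<in> T")
  case True
  have uT: "u \<notin> T" using T by auto
  have fT: "finite T" using T fin finite_subset by blast
  have e1: "V - insert u T = V - {u} - T" by auto
  have fB: "finite (V - {u} - T)" using fin by auto
  have "cut_value V W (insert u T) = (\<Sum>b\<in>V - {u} - T. W u b) + (\<Sum>a\<in>T. \<Sum>b\<in>V - {u} - T. W a b)"
    unfolding cut_value_def e1 using uT fT by simp
  also have "(\<Sum>a\<in>T. \<Sum>b\<in>V - {u} - T. W a b) = (\<Sum>b\<in>V - {u} - T. W v b) + (\<Sum>a\<in>T-{v}. \<Sum>b\<in>V - {u} - T. W a b)"
    by (rule sum.remove[OF fT True])
  also have "(\<Sum>a\<in>T-{v}. \<Sum>b\<in>V - {u} - T. W a b) = (\<Sum>a\<in>T-{v}. \<Sum>b\<in>V - {u} - T. p a b)"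
    apply (rule sum.cong, simp, rule sum.cong, simp) using P1 T True by auto
  finally have "cut_value V W (insert u T) = (\<Sum>b\<in>V - {u} - T. W u b + W v b) + (\<Sum>a\<in>T-{v}. \<Sum>b\<in>V - {u} - T. p a b)"
    by (simp add: sum.distrib)
  also have "(\<Sum>b\<in>V - {u} - T. W u b + W v b) = (\<Sum>b\<in>V - {u} - T. p v b)"
    apply (rule sum.cong, simp) using P2 True by auto
  also have "(\<Sum>b\<in>V - {u} - T. p v b) + (\<Sum>a\<in>T-{v}. \<Sum>b\<in>V - {u} - T. p a b) = cut_value (V - {u}) p T"
    unfolding cut_value_def using True fT sum.remove[of T v "\<lambda>a. \<Sum>b\<in>V - {u} - T. p a b"] by simp
  finally show ?thesis using True by simp
next
  case False
  have e1: "V - T = insert u (V - {u} - T)" using T uV by auto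
  have fB: "finite (V - {u} - T)" using fin by auto
  have vB: "v \<in> V - {u} - T" using False vV uv by auto
  have "cut_value V W T = (\<Sum>a\<in>T. \<Sum>b\<in>V - {u} - T. p a b)"
    unfolding cut_value_def
  proof (rule sum.cong, simp)
    fix a assume aT: "a \<in> T"
    have aV: "a \<in> V-{u}-{v}" using aT T False by auto
    have "(\<Sum>b\<in>V - T. W a b) = W a u + (\<Sum>b\<in>V - {u} - T. W a b)"
      unfolding e1 using fB by simp
    also have "(\<Sum>b\<in>V - {u} - T. W a b) = W a v + (\<Sum>b\<in>V - {u} - T - {v}. W a b)"
      by (rule sum.remove[OF fB vB])
    also have "(\<Sum>b\<in>V - {u} - T - {v}. W a b) = (\<Sum>b\<in>V - {u} - T - {v}. p a b)"
      apply (rule sum.cong, simp) using P1 aV by auto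
    finally have "(\<Sum>b\<in>V - T. W a b) = (W a u + W a v) + (\<Sum>b\<in>V - {u} - T - {v}. p a b)" by simp
    also have "\<dots> = p a v + (\<Sum>b\<in>V - {u} - T - {v}. p a b)" using P3 aV by simp
    also have "\<dots> = (\<Sum>b\<in>V - {u} - T. p a b)" using vB fB sum.remove[of "V - {u} - T" v "p a"] by simp
    finally show "(\<Sum>b\<in>V - T. W a b) = (\<Sum>b\<in>V - {u} - T. p a b)" .
  qed
  then show ?thesis using False unfolding cut_value_def by simp
qed

theorem mainTheorem11:
  fixes V :: "'a set" and w :: "'a \<Rightarrow> 'a \<Rightarrow> real" and \<gamma> :: real and S :: "'a set" and u v :: 'a
  assumes "maxcut_instance V w"
    and "stable_cut V \<gamma> w S"
    and "u \<in> V" and "v \<in> V" and "u \<noteq> v"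
    and "u \<in> S \<longleftrightarrow> v \<in> S"
  shows "gamma_stable (merge_set V u v) \<gamma> (merge_weight w u v)
         \<and> stable_cut (merge_set V u v) \<gamma> (merge_weight w u v) (induced_cut S u v)"
proof -
  note inst = assms(1)[unfolded maxcut_instance_def]
  have fin: "finite V" using inst by simp
  have wnn: "\<And>a b. a \<in> V \<Longrightarrow> b \<in> V \<Longrightarrow> 0 \<le> w a b" using inst by blast
  have wsym: "\<And>a b. a \<in> V \<Longrightarrow> b \<in> V \<Longrightarrow> w a b = w b a" using inst by blast
  have wdiag: "\<And>a. a \<in> V \<Longrightarrow> w a a = 0" using inst by blast
  have SV: "S \<subseteq> V" using assms(2) unfolding stable_cut_def by simp
  define m where "m = merge_weight w u v"
  define S' where "S' = induced_cut S u v"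
  have S'V: "S' \<subseteq> V - {u}" using SV assms(3-5) unfolding S'_def induced_cut_def by auto
  have main: "is_max_cut (V - {u}) p S'" if pert: "perturbation (V - {u}) \<gamma> m p" for p
  proof -
    note pinst = pert[unfolded perturbation_def maxcut_instance_def]
    have pb: "\<And>a b. a \<in> V - {u} \<Longrightarrow> b \<in> V - {u} \<Longrightarrow> m a b \<le> p a b \<and> p a b \<le> \<gamma> * m a b"
      using pinst by blast
    have psym: "\<And>a b. a \<in> V - {u} \<Longrightarrow> b \<in> V - {u} \<Longrightarrow> p a b = p b a \<and> 0 \<le> p a b"
      using pinst by blast
    have mnn: "\<And>a b. a \<in> V - {u} \<Longrightarrow> b \<in> V - {u} \<Longrightarrow> 0 \<le> m a b"
      unfolding m_def merge_weight_def using wnn assms(3) by (auto intro!: add_nonneg_nonneg)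
    show ?thesis
    proof (cases "\<gamma> < 1")
      case True
      have p0: "\<And>a b. a \<in> V - {u} \<Longrightarrow> b \<in> V - {u} \<Longrightarrow> p a b = 0"
      proof -
        fix a b assume a: "a \<in> V - {u}" and b: "b \<in> V - {u}"
        have "m a b \<le> \<gamma> * m a b" using pb[OF a b] by linarith
        moreover have "\<gamma> * m a b < m a b" if "m a b > 0"
          using mult_strict_right_mono[OF True that] by simp
        ultimately have "m a b = 0" using mnn[OF a b] by linarith
        then show "p a b = 0" using pb[OF a b] by simp
      qed
      have "\<And>T. T \<subseteq> V - {u} \<Longrightarrow> cut_value (V - {u}) p T = 0"
        unfolding cut_value_def
        by (rule sum.neutral, rule ballI, rule sum.neutral) (auto intro: p0)
      then show ?thesis unfolding is_max_cut_def using S'V by simp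
    next
      case False
      define t where "t z = (if w v z + w u z = 0 then 1 else p v z / (w v z + w u z))" for z
      define W where "W x y = (if x = y then 0
        else if (x = u \<and> y = v) \<or> (x = v \<and> y = u) then w u v
        else if x = u then w u y * t y
        else if x = v then w v y * t y
        else if y = u then w x u * t x
        else if y = v then w x v * t x
        else p x y)" for x y
      have mv: "\<And>z. z \<in> V - {u} - {v} \<Longrightarrow> m v z = w v z + w u z"
        unfolding m_def merge_weight_def by auto
      have key: "\<And>z. z \<in> V - {u} - {v} \<Longrightarrow> (w v z + w u z) * t z = p v z \<and> 1 \<le> t z \<and> t z \<le> \<gamma>"
      proof -
        fix z assume z: "z \<in> V - {u} - {v}"
        have zz: "z \<in> V - {u}" "v \<in> V - {u}" using z assms(4,5) by auto
        have b: "w v z + w u z \<le> p v z" "p v z \<le> \<gamma> * (w v z + w u z)"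
          using pb[OF zz(2) zz(1)] mv[OF z] by auto
        have nn: "0 \<le> w v z" "0 \<le> w u z" using wnn[of v z] wnn[of u z] z assms(3,4) by auto
        show "(w v z + w u z) * t z = p v z \<and> 1 \<le> t z \<and> t z \<le> \<gamma>"
        proof (cases "w v z + w u z = 0")
          case True then show ?thesis using b False unfolding t_def by auto
        next
          case ne: False
          then have pos: "w v z + w u z > 0" using nn by linarith
          show ?thesis using ne pos b unfolding t_def
            by (auto simp: field_simps)
        qed
      qed
      have Wpert: "perturbation V \<gamma> w W"
        unfolding perturbation_def maxcut_instance_def
      proof (intro conjI ballI)
        show "finite V" by (rule fin)
      next
        fix a b assume a: "a \<in> V" and b: "b \<in> V"
        show "W a b = W b a" unfolding W_def using wsym[OF a b] wsym[OF assms(3,4)] psym[of a b] a b by auto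
      next
        fix a b assume a: "a \<in> V" and b: "b \<in> V"
        have "w a b \<le> W a b \<and> W a b \<le> \<gamma> * w a b"
        proof -
          have wab: "0 \<le> w a b" using wnn a b by auto
          consider "a = b" | "a \<noteq> b" "(a = u \<and> b = v) \<or> (a = v \<and> b = u)"
            | "a \<noteq> b" "\<not>((a = u \<and> b = v) \<or> (a = v \<and> b = u))" "a = u \<or> a = v"
            | "a \<noteq> b" "\<not>((a = u \<and> b = v) \<or> (a = v \<and> b = u))" "a \<noteq> u" "a \<noteq> v" "b = u \<or> b = v"
            | "a \<noteq> b" "a \<noteq> u" "a \<noteq> v" "b \<noteq> u" "b \<noteq> v" by blast
          then show ?thesis
          proof cases
            case 1 then show ?thesis unfolding W_def using wdiag a by auto
          next
            case 2
            have e: "W a b = w a b" using 2 wsym[OF assms(3,4)] unfolding W_def by auto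
            have "w a b \<le> \<gamma> * w a b" using False wab
              by (metis linorder_not_less mult_le_cancel_right1 mult.commute)
            then show ?thesis using e by simp
          next
            case 3
            have bz: "b \<in> V - {u} - {v}" using 3 b by auto
            have k: "1 \<le> t b" "t b \<le> \<gamma>" using key[OF bz] by auto
            have "w a b \<le> w a b * t b" using wab k by (simp add: mult_le_cancel_left1)
            moreover have "w a b * t b \<le> \<gamma> * w a b" using wab k
              by (simp add: mult.commute mult_right_mono)
            moreover have "W a b = w a b * t b" using 3 unfolding W_def by auto
            ultimately show ?thesis by simp
          next
            case 4
            have az: "a \<in> V - {u} - {v}" using 4 a by auto
            have k: "1 \<le> t a" "t a \<le> \<gamma>" using key[OF az] by auto
            have "w a b \<le> w a b * t a" using wab k by (simp add: mult_le_cancel_left1)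
            moreover have "w a b * t a \<le> \<gamma> * w a b" using wab k
              by (simp add: mult.commute mult_right_mono)
            moreover have "W a b = w a b * t a" using 4 unfolding W_def by auto
            ultimately show ?thesis by simp
          next
            case 5
            have "m a b = w a b" using 5 unfolding m_def merge_weight_def by auto
            then show ?thesis using pb[of a b] a b 5 unfolding W_def by auto
          qed
        qed
        then show "w a b \<le> W a b" "W a b \<le> \<gamma> * w a b" by auto
        show "0 \<le> W a b" using \<open>w a b \<le> W a b\<close> wnn a b by (meson order_trans)
      next
        fix a assume "a \<in> V" then show "W a a = 0" unfolding W_def by simp
      qed
      have WS: "is_max_cut V W S" using assms(2) Wpert unfolding stable_cut_def by blast
      have P1: "\<forall>a\<in>V-{u}-{v}. \<forall>b\<in>V-{u}-{v}. W a b = p a b"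
      proof (intro ballI)
        fix a b assume a: "a \<in> V-{u}-{v}" and b: "b \<in> V-{u}-{v}"
        show "W a b = p a b"
        proof (cases "a = b")
          case True
          have "m a a = 0" unfolding m_def merge_weight_def using wdiag a by auto
          then show ?thesis using True pb[of a a] a unfolding W_def by auto
        next
          case False then show ?thesis using a b unfolding W_def by auto
        qed
      qed
      have P2: "\<forall>b\<in>V-{u}-{v}. W u b + W v b = p v b"
      proof
        fix b assume b: "b \<in> V-{u}-{v}"
        have "W u b + W v b = (w v b + w u b) * t b" using b assms(5) unfolding W_def
          by (auto simp: algebra_simps)
        then show "W u b + W v b = p v b" using key[OF b] by simp
      qed
      have P3: "\<forall>a\<in>V-{u}-{v}. W a u + W a v = p a v"
      proof
        fix a assume a: "a \<in> V-{u}-{v}"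
        have "W a u + W a v = (w v a + w u a) * t a" using a assms(5) wsym[of a u] wsym[of a v] assms(3,4)
          unfolding W_def by (auto simp: algebra_simps)
        also have "\<dots> = p v a" using key[OF a] by simp
        also have "\<dots> = p a v" using psym[of v a] a assms(4,5) by auto
        finally show "W a u + W a v = p a v" .
      qed
      have liftS: "(if v \<in> S' then insert u S' else S') = S"
        using SV assms(3-6) unfolding S'_def induced_cut_def by auto
      show ?thesis unfolding is_max_cut_def
      proof (intro conjI allI impI)
        show "S' \<subseteq> V - {u}" by (rule S'V)
      next
        fix T assume T: "T \<subseteq> V - {u}"
        have lT: "(if v \<in> T then insert u T else T) \<subseteq> V" using T assms(3) by auto
        have "cut_value (V - {u}) p T = cut_value V W (if v \<in> T then insert u T else T)"
          using lift_cut[OF fin assms(3-5) P1 P2 P3 T] by simp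
        also have "\<dots> \<le> cut_value V W S" using WS lT unfolding is_max_cut_def by blast
        also have "\<dots> = cut_value (V - {u}) p S'"
          using lift_cut[OF fin assms(3-5) P1 P2 P3 S'V] liftS by simp
        finally show "cut_value (V - {u}) p T \<le> cut_value (V - {u}) p S'" .
      qed
    qed
  qed
  have sc: "stable_cut (merge_set V u v) \<gamma> (merge_weight w u v) (induced_cut S u v)"
    unfolding stable_cut_def merge_set_def using S'V main unfolding S'_def m_def by blast
  then show ?thesis unfolding gamma_stable_def by blast
qed

end
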